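(* Let $0<\delta<1$, $0<\varepsilon<1/7$, $2<\alpha<\min(\frac{2}{1-\delta},3)$ and $0<\rho<\min\!\left(\frac{1-\delta}{2},\frac{2-\alpha(1-\delta)}{4}\right)$ be constants, $p=n^{\delta-1}$, and $H$ a balanced graph on $m=n^{\rho}$ vertices with average degree $\alpha$; let $n$ be sufficiently large. Let $p(G)$ denote the probability of outputting the graph $G$ under $G(n,p)$ and $p_H(G)$ the probability of outputting $G$ under $G_H(n,p)$. Then for every constant $\beta\in[0,1)$, with probability at least $1-\frac{4\varepsilon}{(1-\beta)^2}$ over $G\sim G(n,p)$, $p_H(G)\ge\beta\,p(G)$.
   Context: A graph with average degree $\alpha$ is balanced if every induced subgraph has average degree at most $\alpha$. $G(n,p)$ is the Erdős–Rényi random graph on $[n]$. With $H$ on vertex set $[m]$ ($m$ dividing $n$), partition $[n]$ into parts $P_i=\{(i-1)\frac nm+1,\dots,i\frac nm\}$. Distribution $G_H(n,p)$: sample $G'\sim G(n,p)$, choose a uniformly random set $M=\{v_1,\dots,v_m\}$ with $v_i\in P_i$, and replace the induced subgraph $G'[M]$ by a copy of $H$ with vertex $i$ of $H$ placed at $v_i$. *)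

theory Defs
  imports "HOL-Probability.Probability"
begin

text \<open>Simple graphs on vertex set {1..n} are represented by their edge sets:
  sets of 2-element subsets of {1..n}.\<close>

definition all_pairs :: "nat \<Rightarrow> nat set set" where
  "all_pairs n = {e. e \<subseteq> {1..n} \<and> card e = 2}"

definition is_graph :: "nat \<Rightarrow> nat set set \<Rightarrow> bool" where
  "is_graph n E \<longleftrightarrow> E \<subseteq> all_pairs n"

definition induced_avg_degree :: "nat set set \<Rightarrow> nat set \<Rightarrow> real" where
  "induced_avg_degree E S = 2 * real (card {e \<in> E. e \<subseteq> S}) / real (card S)"

definition avg_degree :: "nat \<Rightarrow> nat set set \<Rightarrow> real" where
  "avg_degree n E = induced_avg_degree E {1..n}"

definition balanced :: "nat \<Rightarrow> nat set set \<Rightarrow> bool" where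
  "balanced m E \<longleftrightarrow> (\<forall>S. S \<subseteq> {1..m} \<and> S \<noteq> {} \<longrightarrow> induced_avg_degree E S \<le> avg_degree m E)"

definition gnp :: "nat \<Rightarrow> real \<Rightarrow> nat set set pmf" where
  "gnp n p = map_pmf (\<lambda>f. {e \<in> all_pairs n. f e})
                     (Pi_pmf (all_pairs n) False (\<lambda>_. bernoulli_pmf p))"

definition part :: "nat \<Rightarrow> nat \<Rightarrow> nat \<Rightarrow> nat set" where
  "part n m i = {(i - 1) * (n div m) + 1 .. i * (n div m)}"

definition plant :: "nat \<Rightarrow> nat set set \<Rightarrow> (nat \<Rightarrow> nat) \<Rightarrow> nat set set \<Rightarrow> nat set set" where
  "plant m H v G' = {e \<in> G'. \<not> e \<subseteq> v ` {1..m}} \<union> (image v) ` H"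

definition gHnp :: "nat \<Rightarrow> real \<Rightarrow> nat \<Rightarrow> nat set set \<Rightarrow> nat set set pmf" where
  "gHnp n p m H =
     bind_pmf (gnp n p) (\<lambda>G'.
     bind_pmf (pmf_of_set (PiE {1..m} (part n m))) (\<lambda>v.
     return_pmf (plant m H v G')))"

end

theory Submission
  imports Defs
begin

definition qq :: "real \<Rightarrow> 'a set \<Rightarrow> 'a set \<Rightarrow> real" where
  "qq p S A = p ^ card A * (1 - p) ^ card (S - A)"

lemma finite_all_pairs: "finite (all_pairs n)"
  unfolding all_pairs_def by (rule finite_subset[of _ "Pow {1..n}"]) auto

lemma core_prob:
  assumes U: "finite U" and S: "S \<subseteq> U" and A: "A \<subseteq> S" and p: "0 \<le> p" "p \<le> 1"
  shows "measure_pmf.prob (map_pmf (\<lambda>f. {e \<in> U. f e}) (Pi_pmf U False (\<lambda>_. bernoulli_pmf p)))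
           {G. G \<inter> S = A} = qq p S A"
proof -
  define B where "B = (\<lambda>e. if e \<in> S then {e \<in> A} else (UNIV :: bool set))"
  have pre: "{f. {e \<in> U. f e} \<inter> S = A} = Pi U B"
    using S A unfolding B_def Pi_def by auto
  have "measure_pmf.prob (map_pmf (\<lambda>f. {e \<in> U. f e}) (Pi_pmf U False (\<lambda>_. bernoulli_pmf p)))
           {G. G \<inter> S = A} = measure_pmf.prob (Pi_pmf U False (\<lambda>_. bernoulli_pmf p)) (Pi U B)"
    by (simp add: pre)
  also have "\<dots> = (\<Prod>e\<in>U. measure_pmf.prob (bernoulli_pmf p) (B e))"
    by (rule measure_Pi_pmf_Pi[OF U])
  also have "\<dots> = (\<Prod>e\<in>U. if e \<in> S then (if e \<in> A then p else 1 - p) else 1)"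
    by (intro prod.cong refl) (use p in \<open>auto simp: B_def measure_pmf_single\<close>)
  also have "\<dots> = (\<Prod>e\<in>S. if e \<in> A then p else 1 - p)"
    using S U by (subst prod.mono_neutral_right[of U S]) (auto intro: finite_subset)
  also have "\<dots> = (\<Prod>e\<in>A. if e \<in> A then p else 1 - p) * (\<Prod>e\<in>S - A. if e \<in> A then p else 1 - p)"
    using A S U by (subst prod.subset_diff[of A S]) (auto intro: finite_subset simp: mult.commute)
  also have "\<dots> = qq p S A" unfolding qq_def by simp
  finally show ?thesis .
qed

definition Vs :: "nat \<Rightarrow> nat \<Rightarrow> (nat \<Rightarrow> nat) set" where
  "Vs n m = PiE {1..m} (part n m)"
definition Pv :: "nat \<Rightarrow> nat \<Rightarrow> (nat \<Rightarrow> nat) \<Rightarrow> nat set set" where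
  "Pv n m v = {e \<in> all_pairs n. e \<subseteq> v ` {1..m}}"
definition Hv :: "(nat \<Rightarrow> nat) \<Rightarrow> nat set set \<Rightarrow> nat set set" where
  "Hv v H = image v ` H"

lemma part_disj:
  assumes "x \<in> part n m i" "x \<in> part n m j" "1 \<le> i" "1 \<le> j"
  shows "i = j"
proof (rule ccontr)
  assume "i \<noteq> j"
  then consider "i < j" | "j < i" by linarith
  then show False
  proof cases
    case 1
    then have "i * (n div m) \<le> (j - 1) * (n div m)" by (intro mult_right_mono) auto
    moreover have "x \<le> i * (n div m)" "(j - 1) * (n div m) + 1 \<le> x" using assms unfolding part_def by auto
    ultimately show False by linarith
  next
    case 2
    then have "j * (n div m) \<le> (i - 1) * (n div m)" by (intro mult_right_mono) auto
    moreover have "x \<le> j * (n div m)" "(i - 1) * (n div m) + 1 \<le> x" using assms unfolding part_def by auto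
    ultimately show False by linarith
  qed
qed

lemma part_range:
  assumes "m dvd n" "i \<in> {1..m}"
  shows "part n m i \<subseteq> {1..n}"
proof -
  have "i * (n div m) \<le> m * (n div m)" using assms by (intro mult_right_mono) auto
  also have "\<dots> = n" using assms by simp
  finally show ?thesis unfolding part_def by auto
qed

lemma part_nonempty:
  assumes "m dvd n" "1 \<le> m" "1 \<le> n" "1 \<le> i"
  shows "part n m i \<noteq> {}"
proof -
  have "n div m \<ge> 1" using assms by (metis div_by_1 div_greater_zero_iff dvd_imp_le le_zero_eq less_one nat_le_linear not_one_le_zero)
  then have "(i - 1) * (n div m) + 1 \<le> i * (n div m)"
    using assms(4) by (cases i) auto
  then show ?thesis unfolding part_def by auto
qed

lemma Vs_finite: "finite (Vs n m)"
  unfolding Vs_def part_def by (intro finite_PiE) auto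

lemma Vs_nonempty:
  assumes "m dvd n" "1 \<le> m" "1 \<le> n"
  shows "Vs n m \<noteq> {}"
  using part_nonempty[OF assms] unfolding Vs_def by (auto simp add: PiE_eq_empty_iff)

lemma Vs_inj:
  assumes "v \<in> Vs n m"
  shows "inj_on v {1..m}"
  using assms part_disj unfolding Vs_def inj_on_def PiE_def Pi_def
  by (metis (no_types, lifting) atLeastAtMost_iff mem_Collect_eq Int_iff)

lemma Vs_range:
  assumes "v \<in> Vs n m" "m dvd n" "i \<in> {1..m}"
  shows "v i \<in> {1..n}"
  using assms part_range unfolding Vs_def by blast

lemma Vs_same:
  assumes "v \<in> Vs n m" "w \<in> Vs n m" "i \<in> {1..m}" "j \<in> {1..m}" "v i = w j"
  shows "i = j"
proof -
  have "v i \<in> part n m i" using assms(1,3) unfolding Vs_def by (simp add: PiE_iff)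
  moreover have "w j \<in> part n m j" using assms(2,4) unfolding Vs_def by (simp add: PiE_iff)
  ultimately show ?thesis using part_disj[of "v i" n m i j] assms by auto
qed

lemma Hv_sub_Pv:
  assumes "v \<in> Vs n m" "m dvd n" "is_graph m H"
  shows "Hv v H \<subseteq> Pv n m v"
proof
  fix e assume "e \<in> Hv v H"
  then obtain f where f: "f \<in> H" "e = v ` f" unfolding Hv_def by auto
  have fs: "f \<subseteq> {1..m}" "card f = 2" using f assms(3) unfolding is_graph_def all_pairs_def by auto
  have "card e = 2" using f fs Vs_inj[OF assms(1)] by (metis card_image inj_on_subset)
  moreover have "e \<subseteq> {1..n}" using f fs Vs_range[OF assms(1,2)] by auto
  moreover have "e \<subseteq> v ` {1..m}" using f fs by auto
  ultimately show "e \<in> Pv n m v" unfolding Pv_def all_pairs_def by auto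
qed

lemma set_gnp: "set_pmf (gnp n p) \<subseteq> Pow (all_pairs n)"
  unfolding gnp_def by auto

lemma pmf_gHnp:
  assumes "m dvd n" "1 \<le> m" "1 \<le> n" "is_graph m H" "G \<subseteq> all_pairs n" "0 \<le> p" "p \<le> 1"
  shows "pmf (gHnp n p m H) G =
    (\<Sum>v\<in>Vs n m. if G \<inter> Pv n m v = Hv v H then qq p (all_pairs n - Pv n m v) (G - Pv n m v) else 0)
      / real (card (Vs n m))"
proof -
  let ?U = "all_pairs n"
  have "gHnp n p m H = bind_pmf (pmf_of_set (Vs n m)) (\<lambda>v. map_pmf (plant m H v) (gnp n p))"
    unfolding gHnp_def Vs_def map_pmf_def by (subst bind_commute_pmf) simp
  then have "pmf (gHnp n p m H) G = (\<Sum>v\<in>Vs n m. pmf (map_pmf (plant m H v) (gnp n p)) G) / real (card (Vs n m))"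
    using pmf_bind_pmf_of_set[OF Vs_nonempty[OF assms(1-3)] Vs_finite] by simp
  also have "\<dots> = (\<Sum>v\<in>Vs n m. if G \<inter> Pv n m v = Hv v H then qq p (?U - Pv n m v) (G - Pv n m v) else 0)
      / real (card (Vs n m))"
  proof (intro arg_cong2[where f="(/)"] sum.cong refl)
    fix v assume v: "v \<in> Vs n m"
    have HP: "Hv v H \<subseteq> Pv n m v" by (rule Hv_sub_Pv[OF v assms(1,4)])
    have eq: "plant m H v -` {G} \<inter> set_pmf (gnp n p) =
       (if G \<inter> Pv n m v = Hv v H then {G'. G' \<inter> (?U - Pv n m v) = G - Pv n m v} else {}) \<inter> set_pmf (gnp n p)"
    proof -
      have "plant m H v G' = G \<longleftrightarrow> (G \<inter> Pv n m v = Hv v H \<and> G' \<inter> (?U - Pv n m v) = G - Pv n m v)"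
        if "G' \<subseteq> ?U" for G'
      proof -
        have pl: "plant m H v G' = (G' - Pv n m v) \<union> Hv v H"
          using that unfolding plant_def Pv_def Hv_def by auto
        show ?thesis unfolding pl using HP that assms(5) by blast
      qed
      then show ?thesis using set_gnp[of n p] by auto
    qed
    have "pmf (map_pmf (plant m H v) (gnp n p)) G = measure_pmf.prob (gnp n p) (plant m H v -` {G})"
      by (rule pmf_map)
    also have "\<dots> = measure_pmf.prob (gnp n p) (plant m H v -` {G} \<inter> set_pmf (gnp n p))"
      by (rule measure_Int_set_pmf[symmetric])
    also have "\<dots> = measure_pmf.prob (gnp n p) (if G \<inter> Pv n m v = Hv v H then {G'. G' \<inter> (?U - Pv n m v) = G - Pv n m v} else {})"
      unfolding eq by (rule measure_Int_set_pmf)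
    also have "\<dots> = (if G \<inter> Pv n m v = Hv v H then qq p (?U - Pv n m v) (G - Pv n m v) else 0)"
      using core_prob[OF finite_all_pairs, where S="?U - Pv n m v" and A="G - Pv n m v" and p=p] assms(5-7)
      unfolding gnp_def by auto
    finally show "pmf (map_pmf (plant m H v) (gnp n p)) G = (if G \<inter> Pv n m v = Hv v H then qq p (?U - Pv n m v) (G - Pv n m v) else 0)" .
  qed
  finally show ?thesis .
qed

lemma pmf_gnp:
  assumes "G \<subseteq> all_pairs n" "0 \<le> p" "p \<le> 1"
  shows "pmf (gnp n p) G = qq p (all_pairs n) G"
proof -
  have "{G'. G' \<inter> all_pairs n = G} \<inter> set_pmf (gnp n p) = {G} \<inter> set_pmf (gnp n p)"
    using set_gnp[of n p] assms(1) by auto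
  then have "measure_pmf.prob (gnp n p) {G'. G' \<inter> all_pairs n = G} = measure_pmf.prob (gnp n p) {G}"
    using measure_Int_set_pmf[of "gnp n p" "{G'. G' \<inter> all_pairs n = G}"] measure_Int_set_pmf[of "gnp n p" "{G}"] by simp
  moreover have "measure_pmf.prob (gnp n p) {G'. G' \<inter> all_pairs n = G} = qq p (all_pairs n) G"
    using core_prob[OF finite_all_pairs, where S="all_pairs n" and A=G and p=p] assms unfolding gnp_def by auto
  ultimately show ?thesis by (simp add: measure_pmf_single)
qed

lemma qq_split:
  assumes "finite U" "P \<subseteq> U" "G \<subseteq> U"
  shows "qq p U G = qq p (U - P) (G - P) * qq p P (G \<inter> P)"
proof -
  have fin: "finite P" "finite G" using assms finite_subset by blast+
  have c1: "card G = card (G - P) + card (G \<inter> P)"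
  proof -
    have "G = (G - P) \<union> (G \<inter> P)" by blast
    then have "card G = card ((G - P) \<union> (G \<inter> P))" by simp
    also have "\<dots> = card (G - P) + card (G \<inter> P)" using fin by (intro card_Un_disjoint) auto
    finally show ?thesis .
  qed
  have c2: "card (U - G) = card ((U - P) - (G - P)) + card (P - G \<inter> P)"
  proof -
    have "U - G = ((U - P) - (G - P)) \<union> (P - G \<inter> P)" using assms by auto
    moreover have "((U - P) - (G - P)) \<inter> (P - G \<inter> P) = {}" by auto
    moreover have "finite (U - P - (G - P))" "finite (P - G \<inter> P)" using assms(1) fin by auto
    ultimately show ?thesis by (metis card_Un_disjoint)
  qed
  show ?thesis unfolding qq_def c1 c2 by (simp add: power_add algebra_simps)
qed

lemma qq_comb:
  assumes "finite P" "finite P'" "A \<subseteq> P" "A' \<subseteq> P'" "A \<inter> P' = A' \<inter> P"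
  shows "qq p P A * qq p P' A' = qq p (P \<union> P') (A \<union> A') * qq p (P \<inter> P') (A \<inter> P')"
proof -
  have fin: "finite A" "finite A'" using assms finite_subset by blast+
  have "A \<inter> A' = A \<inter> P'" using assms by blast
  then have c1: "card A + card A' = card (A \<union> A') + card (A \<inter> P')"
    using fin card_Un_Int by metis
  have e1: "(P - A) \<union> (P' - A') = (P \<union> P') - (A \<union> A')" using assms by blast
  have e2: "(P - A) \<inter> (P' - A') = (P \<inter> P') - (A \<inter> P')" using assms by blast
  have c2: "card (P - A) + card (P' - A') = card ((P \<union> P') - (A \<union> A')) + card ((P \<inter> P') - (A \<inter> P'))"
    using card_Un_Int[of "P - A" "P' - A'"] assms(1,2) e1 e2 by simp
  have "qq p P A * qq p P' A' = p ^ (card A + card A') * (1 - p) ^ (card (P - A) + card (P' - A'))"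
    unfolding qq_def by (simp add: power_add algebra_simps)
  also have "\<dots> = qq p (P \<union> P') (A \<union> A') * qq p (P \<inter> P') (A \<inter> P')"
    unfolding c1 c2 qq_def by (simp add: power_add algebra_simps)
  finally show ?thesis .
qed

lemma qq_pos: "0 < p \<Longrightarrow> p < 1 \<Longrightarrow> 0 < qq p S A"
  unfolding qq_def by simp

definition Lr :: "nat \<Rightarrow> real \<Rightarrow> nat \<Rightarrow> nat set set \<Rightarrow> nat set set \<Rightarrow> real" where
  "Lr n p m H G = (\<Sum>v\<in>Vs n m. (if G \<inter> Pv n m v = Hv v H then 1 else 0) * (1 / qq p (Pv n m v) (Hv v H)))
      / real (card (Vs n m))"

lemma pmf_gHnp_Lr:
  assumes "m dvd n" "1 \<le> m" "1 \<le> n" "is_graph m H" "G \<subseteq> all_pairs n" "0 < p" "p < 1"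
  shows "pmf (gHnp n p m H) G = Lr n p m H G * pmf (gnp n p) G"
proof -
  have "pmf (gHnp n p m H) G =
    (\<Sum>v\<in>Vs n m. if G \<inter> Pv n m v = Hv v H then qq p (all_pairs n - Pv n m v) (G - Pv n m v) else 0)
      / real (card (Vs n m))" using pmf_gHnp[OF assms(1-5)] assms(6,7) by simp
  also have "\<dots> = (\<Sum>v\<in>Vs n m. (if G \<inter> Pv n m v = Hv v H then 1 else 0) * (1 / qq p (Pv n m v) (Hv v H)) * pmf (gnp n p) G)
      / real (card (Vs n m))"
  proof (intro arg_cong2[where f="(/)"] sum.cong refl)
    fix v assume v: "v \<in> Vs n m"
    have PU: "Pv n m v \<subseteq> all_pairs n" unfolding Pv_def by auto
    show "(if G \<inter> Pv n m v = Hv v H then qq p (all_pairs n - Pv n m v) (G - Pv n m v) else 0) =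
         (if G \<inter> Pv n m v = Hv v H then 1 else 0) * (1 / qq p (Pv n m v) (Hv v H)) * pmf (gnp n p) G"
    proof (cases "G \<inter> Pv n m v = Hv v H")
      case True
      have "pmf (gnp n p) G = qq p (all_pairs n - Pv n m v) (G - Pv n m v) * qq p (Pv n m v) (Hv v H)"
        using pmf_gnp[OF assms(5)] assms(6,7) qq_split[OF finite_all_pairs PU assms(5), of p] True by simp
      moreover have "qq p (Pv n m v) (Hv v H) \<noteq> 0" using qq_pos[OF assms(6,7)] by (metis less_irrefl)
      ultimately show ?thesis using True by simp
    qed simp
  qed
  also have "\<dots> = Lr n p m H G * pmf (gnp n p) G"
    unfolding Lr_def by (simp add: sum_distrib_right)
  finally show ?thesis .
qed

definition Ex :: "nat \<Rightarrow> real \<Rightarrow> (nat set set \<Rightarrow> real) \<Rightarrow> real" where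
  "Ex n p f = (\<Sum>G\<in>Pow (all_pairs n). pmf (gnp n p) G * f G)"

lemma Ex_ind:
  assumes "S \<subseteq> all_pairs n" "A \<subseteq> S" "0 \<le> p" "p \<le> 1"
  shows "Ex n p (\<lambda>G. if G \<inter> S = A then 1 else 0) = qq p S A"
proof -
  have fin: "finite (Pow (all_pairs n))" using finite_all_pairs by simp
  have "Ex n p (\<lambda>G. if G \<inter> S = A then 1 else 0) = sum (pmf (gnp n p)) {G \<in> Pow (all_pairs n). G \<inter> S = A}"
    unfolding Ex_def using fin by (simp add: sum.inter_filter[symmetric] if_distrib cong: if_cong)
  also have "\<dots> = measure_pmf.prob (gnp n p) {G \<in> Pow (all_pairs n). G \<inter> S = A}"
    using fin by (simp add: measure_measure_pmf_finite)
  also have "{G \<in> Pow (all_pairs n). G \<inter> S = A} = {G. G \<inter> S = A} \<inter> Pow (all_pairs n)" by auto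
  also have "measure_pmf.prob (gnp n p) \<dots> = measure_pmf.prob (gnp n p) {G. G \<inter> S = A}"
  proof -
    have "{G. G \<inter> S = A} \<inter> Pow (all_pairs n) \<inter> set_pmf (gnp n p) = {G. G \<inter> S = A} \<inter> set_pmf (gnp n p)"
      using set_gnp[of n p] by auto
    then show ?thesis using measure_Int_set_pmf[of "gnp n p" "{G. G \<inter> S = A} \<inter> Pow (all_pairs n)"]
      measure_Int_set_pmf[of "gnp n p" "{G. G \<inter> S = A}"] by simp
  qed
  also have "\<dots> = qq p S A"
    using core_prob[OF finite_all_pairs assms] unfolding gnp_def .
  finally show ?thesis .
qed

lemma Ex_sum: "Ex n p (\<lambda>G. \<Sum>v\<in>I. f v G) = (\<Sum>v\<in>I. Ex n p (f v))"
  unfolding Ex_def by (simp add: sum_distrib_left sum.swap[of _ I])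

lemma Ex_mult: "Ex n p (\<lambda>G. f G * c) = Ex n p f * c"
  unfolding Ex_def by (simp add: sum_distrib_right mult.assoc)

lemma Ex_div: "Ex n p (\<lambda>G. f G / c) = Ex n p f / c"
  unfolding Ex_def by (simp add: sum_divide_distrib)

lemma Pv_sub: "Pv n m v \<subseteq> all_pairs n" unfolding Pv_def by auto

lemma Ex_Lr:
  assumes "m dvd n" "1 \<le> m" "1 \<le> n" "is_graph m H" "0 < p" "p < 1"
  shows "Ex n p (Lr n p m H) = 1"
proof -
  have "Ex n p (Lr n p m H) = (\<Sum>v\<in>Vs n m. Ex n p (\<lambda>G. if G \<inter> Pv n m v = Hv v H then 1 else 0) * (1 / qq p (Pv n m v) (Hv v H))) / real (card (Vs n m))"
    unfolding Lr_def by (simp add: Ex_div Ex_sum Ex_mult)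
  also have "\<dots> = (\<Sum>v\<in>Vs n m. 1) / real (card (Vs n m))"
  proof (intro arg_cong2[where f="(/)"] sum.cong refl)
    fix v assume v: "v \<in> Vs n m"
    have "Ex n p (\<lambda>G. if G \<inter> Pv n m v = Hv v H then 1 else 0) = qq p (Pv n m v) (Hv v H)"
      using Ex_ind[OF Pv_sub Hv_sub_Pv[OF v assms(1,4)]] assms(5,6) by simp
    moreover have "qq p (Pv n m v) (Hv v H) \<noteq> 0" using qq_pos[OF assms(5,6)] by (metis less_irrefl)
    ultimately show "Ex n p (\<lambda>G. if G \<inter> Pv n m v = Hv v H then 1 else 0) * (1 / qq p (Pv n m v) (Hv v H)) = 1"
      by simp
  qed
  also have "\<dots> = 1" using Vs_nonempty[OF assms(1-3)] Vs_finite[of n m] by simp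
  finally show ?thesis .
qed

lemma cons_eq:
  assumes "A \<subseteq> P" "A' \<subseteq> P'" "A \<inter> P' = A' \<inter> P"
  shows "(G \<inter> P = A \<and> G \<inter> P' = A') \<longleftrightarrow> G \<inter> (P \<union> P') = A \<union> A'"
proof
  assume "G \<inter> P = A \<and> G \<inter> P' = A'"
  then show "G \<inter> (P \<union> P') = A \<union> A'" by (simp add: Int_Un_distrib)
next
  assume h: "G \<inter> (P \<union> P') = A \<union> A'"
  have "G \<inter> P = (G \<inter> (P \<union> P')) \<inter> P" by auto
  also have "\<dots> = (A \<union> A') \<inter> P" by (simp add: h)
  also have "\<dots> = A" using assms by auto
  finally have 1: "G \<inter> P = A" .
  have "G \<inter> P' = (G \<inter> (P \<union> P')) \<inter> P'" by auto
  also have "\<dots> = (A \<union> A') \<inter> P'" by (simp add: h)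
  also have "\<dots> = A'" using assms by auto
  finally have 2: "G \<inter> P' = A'" .
  show "G \<inter> P = A \<and> G \<inter> P' = A'" using 1 2 by simp
qed

lemma cons_nec:
  assumes "G \<inter> P = A" "G \<inter> P' = A'"
  shows "A \<inter> P' = A' \<inter> P"
proof -
  have "A \<inter> P' = G \<inter> P \<inter> P'" using assms(1) by simp
  also have "\<dots> = (G \<inter> P') \<inter> P" by auto
  also have "\<dots> = A' \<inter> P" using assms(2) by simp
  finally show ?thesis .
qed

lemma ratio_le: "(x::real) \<noteq> 0 \<Longrightarrow> x * (1 / (x * y)) \<le> 1 / y"
  by simp

definition W :: "nat \<Rightarrow> real \<Rightarrow> nat \<Rightarrow> nat set set \<Rightarrow> (nat \<Rightarrow> nat) \<Rightarrow> (nat \<Rightarrow> nat) \<Rightarrow> real" where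
  "W n p m H v w = 1 / qq p (Pv n m v \<inter> Pv n m w) (Hv v H \<inter> Pv n m w)"

lemma Ex_Lr2:
  assumes "m dvd n" "1 \<le> m" "1 \<le> n" "is_graph m H" "0 < p" "p < 1"
  shows "Ex n p (\<lambda>G. (Lr n p m H G)^2) \<le> (\<Sum>v\<in>Vs n m. \<Sum>w\<in>Vs n m. W n p m H v w) / real (card (Vs n m))^2"
proof -
  let ?V = "Vs n m"
  let ?ind = "\<lambda>v G. (if G \<inter> Pv n m v = Hv v H then 1 else 0) :: real"
  let ?Q = "\<lambda>v. qq p (Pv n m v) (Hv v H)"
  have Qnz: "?Q v \<noteq> 0" for v using qq_pos[OF assms(5,6)] by (metis less_irrefl)
  have sq: "(Lr n p m H G)^2 = (\<Sum>v\<in>?V. \<Sum>w\<in>?V. ?ind v G * ?ind w G * (1 / (?Q v * ?Q w))) / real (card ?V)^2" for G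
  proof -
    have "(Lr n p m H G)^2 = ((\<Sum>v\<in>?V. ?ind v G * (1 / ?Q v)) * (\<Sum>w\<in>?V. ?ind w G * (1 / ?Q w))) / real (card ?V)^2"
      unfolding Lr_def power_divide by (simp only: power2_eq_square)
    also have "(\<Sum>v\<in>?V. ?ind v G * (1 / ?Q v)) * (\<Sum>w\<in>?V. ?ind w G * (1 / ?Q w))
       = (\<Sum>v\<in>?V. \<Sum>w\<in>?V. (?ind v G * (1 / ?Q v)) * (?ind w G * (1 / ?Q w)))"
      by (rule sum_product)
    also have "\<dots> = (\<Sum>v\<in>?V. \<Sum>w\<in>?V. ?ind v G * ?ind w G * (1 / (?Q v * ?Q w)))"
      by (intro sum.cong refl) simp
    finally show ?thesis .
  qed
  have eq1: "Ex n p (\<lambda>G. (Lr n p m H G)^2) = (\<Sum>v\<in>?V. \<Sum>w\<in>?V. Ex n p (\<lambda>G. ?ind v G * ?ind w G) * (1 / (?Q v * ?Q w))) / real (card ?V)^2"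
    unfolding sq Ex_div Ex_sum Ex_mult ..
  have key: "Ex n p (\<lambda>G. ?ind v G * ?ind w G) * (1 / (?Q v * ?Q w)) \<le> W n p m H v w"
    if v: "v \<in> ?V" and w: "w \<in> ?V" for v w
  proof -
    have Hv: "Hv v H \<subseteq> Pv n m v" and Hw: "Hv w H \<subseteq> Pv n m w"
      using Hv_sub_Pv[OF v assms(1,4)] Hv_sub_Pv[OF w assms(1,4)] .
    have finP: "finite (Pv n m v)" "finite (Pv n m w)"
      by (rule finite_subset[OF Pv_sub finite_all_pairs])+
    show "Ex n p (\<lambda>G. ?ind v G * ?ind w G) * (1 / (?Q v * ?Q w)) \<le> W n p m H v w"
    proof (cases "Hv v H \<inter> Pv n m w = Hv w H \<inter> Pv n m v")
      case True
      have "(\<lambda>G. ?ind v G * ?ind w G) = (\<lambda>G. if G \<inter> (Pv n m v \<union> Pv n m w) = Hv v H \<union> Hv w H then 1 else 0)"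
      proof
        fix G
        have "?ind v G * ?ind w G = (if G \<inter> Pv n m v = Hv v H \<and> G \<inter> Pv n m w = Hv w H then 1 else 0)"
          by simp
        then show "?ind v G * ?ind w G = (if G \<inter> (Pv n m v \<union> Pv n m w) = Hv v H \<union> Hv w H then 1 else 0)"
          unfolding cons_eq[OF Hv Hw True] .
      qed
      moreover have "Ex n p (\<lambda>G. if G \<inter> (Pv n m v \<union> Pv n m w) = Hv v H \<union> Hv w H then 1 else 0)
          = qq p (Pv n m v \<union> Pv n m w) (Hv v H \<union> Hv w H)"
        by (rule Ex_ind[OF Un_least[OF Pv_sub Pv_sub] Un_mono[OF Hv Hw]]) (use assms(5,6) in auto)
      moreover have "?Q v * ?Q w = qq p (Pv n m v \<union> Pv n m w) (Hv v H \<union> Hv w H) * qq p (Pv n m v \<inter> Pv n m w) (Hv v H \<inter> Pv n m w)"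
        by (rule qq_comb[OF finP Hv Hw True])
      moreover have "qq p (Pv n m v \<union> Pv n m w) (Hv v H \<union> Hv w H) \<noteq> 0" using qq_pos[OF assms(5,6)] by (metis less_irrefl)
      ultimately show ?thesis unfolding W_def using ratio_le by simp
    next
      case False
      have "(\<lambda>G. ?ind v G * ?ind w G) = (\<lambda>G. 0)"
      proof
        fix G
        have "\<not> (G \<inter> Pv n m v = Hv v H \<and> G \<inter> Pv n m w = Hv w H)" using False cons_nec by metis
        then show "?ind v G * ?ind w G = 0" by auto
      qed
      moreover have "0 \<le> W n p m H v w"
      proof -
        have "0 < qq p (Pv n m v \<inter> Pv n m w) (Hv v H \<inter> Pv n m w)" by (rule qq_pos[OF assms(5,6)])
        then show ?thesis unfolding W_def by simp
      qed
      ultimately show ?thesis by (simp add: Ex_def)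
    qed
  qed
  have "(\<Sum>v\<in>?V. \<Sum>w\<in>?V. Ex n p (\<lambda>G. ?ind v G * ?ind w G) * (1 / (?Q v * ?Q w)))
     \<le> (\<Sum>v\<in>?V. \<Sum>w\<in>?V. W n p m H v w)"
    by (rule sum_mono, rule sum_mono, rule key)
  then have le: "(\<Sum>v\<in>?V. \<Sum>w\<in>?V. Ex n p (\<lambda>G. ?ind v G * ?ind w G) * (1 / (?Q v * ?Q w))) / real (card ?V)^2
     \<le> (\<Sum>v\<in>?V. \<Sum>w\<in>?V. W n p m H v w) / real (card ?V)^2"
    by (rule divide_right_mono) simp
  show ?thesis unfolding eq1 by (rule le)
qed

definition Tset :: "nat \<Rightarrow> (nat \<Rightarrow> nat) \<Rightarrow> (nat \<Rightarrow> nat) \<Rightarrow> nat set" where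
  "Tset m v w = {i \<in> {1..m}. v i = w i}"

lemma card_pairs_le:
  assumes "finite X" "S \<subseteq> {e. e \<subseteq> X \<and> card e = 2}"
  shows "card S \<le> card X ^ 2"
proof -
  have "S \<subseteq> (\<lambda>(a, b). {a, b}) ` (X \<times> X)"
  proof
    fix e assume "e \<in> S"
    then have "e \<subseteq> X" "card e = 2" using assms(2) by auto
    then obtain a b where "e = {a, b}" by (auto simp: card_2_iff)
    with \<open>e \<subseteq> X\<close> show "e \<in> (\<lambda>(a, b). {a, b}) ` (X \<times> X)" by auto
  qed
  then have "card S \<le> card ((\<lambda>(a, b). {a, b}) ` (X \<times> X))"
    using assms(1) by (intro card_mono) auto
  also have "\<dots> \<le> card (X \<times> X)" by (rule card_image_le) (use assms(1) in auto)
  also have "\<dots> = card X ^ 2" by (simp add: card_cartesian_product power2_eq_square)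
  finally show ?thesis .
qed

lemma S_sub:
  assumes v: "v \<in> Vs n m" and w: "w \<in> Vs n m"
  shows "Pv n m v \<inter> Pv n m w \<subseteq> {e. e \<subseteq> v ` Tset m v w \<and> card e = 2}"
proof
  fix e assume e: "e \<in> Pv n m v \<inter> Pv n m w"
  have c: "card e = 2" using e unfolding Pv_def all_pairs_def by auto
  have "e \<subseteq> v ` Tset m v w"
  proof
    fix x assume x: "x \<in> e"
    then obtain a where a: "a \<in> {1..m}" "x = v a" using e unfolding Pv_def by auto
    obtain b where b: "b \<in> {1..m}" "x = w b" using e x unfolding Pv_def by auto
    have "a = b" using Vs_same[OF v w a(1) b(1)] a b by simp
    then have "a \<in> Tset m v w" using a b unfolding Tset_def by simp
    then show "x \<in> v ` Tset m v w" using a(2) by (rule rev_image_eqI)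
  qed
  then show "e \<in> {e. e \<subseteq> v ` Tset m v w \<and> card e = 2}" using c by simp
qed

lemma A_sub:
  assumes v: "v \<in> Vs n m" and w: "w \<in> Vs n m" and G: "is_graph m H"
  shows "Hv v H \<inter> Pv n m w \<subseteq> image v ` {e \<in> H. e \<subseteq> Tset m v w}"
proof
  fix e assume e: "e \<in> Hv v H \<inter> Pv n m w"
  then obtain f where f: "f \<in> H" "e = v ` f" unfolding Hv_def by auto
  have fm: "f \<subseteq> {1..m}" using f(1) G unfolding is_graph_def all_pairs_def by auto
  have "f \<subseteq> Tset m v w"
  proof
    fix a assume a: "a \<in> f"
    have "v a \<in> w ` {1..m}" using e f a unfolding Pv_def by auto
    then obtain b where b: "b \<in> {1..m}" "v a = w b" by auto
    have "a = b" using Vs_same[OF v w _ b(1) b(2)] a fm by auto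
    then show "a \<in> Tset m v w" using a fm b unfolding Tset_def by auto
  qed
  then show "e \<in> image v ` {e \<in> H. e \<subseteq> Tset m v w}" using f by auto
qed

lemma edges_bound:
  assumes G: "is_graph m H" and B: "balanced m H" and T: "T \<subseteq> {1..m}"
  shows "2 * real (card {e \<in> H. e \<subseteq> T}) \<le> avg_degree m H * real (card T)"
proof (cases "T = {}")
  case True
  have "{e \<in> H. e \<subseteq> T} = {}"
  proof (rule ccontr)
    assume "{e \<in> H. e \<subseteq> T} \<noteq> {}"
    then obtain e where "e \<in> H" "e = {}" using True by auto
    then show False using G unfolding is_graph_def all_pairs_def by auto
  qed
  then show ?thesis using True by simp
next
  case False
  have fin: "finite T" using T finite_subset by blast
  then have pos: "0 < real (card T)" using False by (simp add: card_gt_0_iff)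
  have "induced_avg_degree H T \<le> avg_degree m H" using B T False unfolding balanced_def by auto
  then have "2 * real (card {e \<in> H. e \<subseteq> T}) / real (card T) \<le> avg_degree m H"
    unfolding induced_avg_degree_def .
  then show ?thesis using pos by (simp add: divide_le_eq mult.commute)
qed

lemma W_bound:
  assumes v: "v \<in> Vs n m" and w: "w \<in> Vs n m" and G: "is_graph m H" and B: "balanced m H"
    and al: "avg_degree m H = \<alpha>" and p: "0 < p" "p < 1"
  shows "W n p m H v w \<le> ((1 / p) powr (\<alpha> / 2) * (1 / (1 - p)) ^ m) ^ card (Tset m v w)"
proof -
  let ?S = "Pv n m v \<inter> Pv n m w"
  let ?A = "Hv v H \<inter> Pv n m w"
  let ?T = "Tset m v w"
  define t where "t = card ?T"
  have Tm: "?T \<subseteq> {1..m}" unfolding Tset_def by auto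
  have tm: "t \<le> m" unfolding t_def using card_mono[OF _ Tm] by simp
  have cS: "card ?S \<le> m * t"
  proof -
    have "card ?S \<le> card (v ` ?T) ^ 2"
      by (rule card_pairs_le[OF _ S_sub[OF v w]]) (use Tm finite_subset in blast)
    also have "\<dots> \<le> t ^ 2" unfolding t_def by (intro power_mono card_image_le) (use Tm finite_subset in blast)+
    also have "\<dots> \<le> m * t" unfolding power2_eq_square using tm by (intro mult_right_mono) auto
    finally show ?thesis .
  qed
  have cA: "2 * real (card ?A) \<le> \<alpha> * real t"
  proof -
    have "card ?A \<le> card (image v ` {e \<in> H. e \<subseteq> ?T})"
      by (rule card_mono[OF _ A_sub[OF v w G]])
         (rule finite_imageI, rule finite_subset[of _ "Pow {1..m}"], use G in \<open>auto simp: is_graph_def all_pairs_def\<close>)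
    also have "\<dots> \<le> card {e \<in> H. e \<subseteq> ?T}" by (rule card_image_le)
         (rule finite_subset[of _ "Pow {1..m}"], use G in \<open>auto simp: is_graph_def all_pairs_def\<close>)
    finally have "real (card ?A) \<le> real (card {e \<in> H. e \<subseteq> ?T})" by simp
    then show ?thesis using edges_bound[OF G B Tm] al unfolding t_def by simp
  qed
  have ip: "1 \<le> 1 / p" using p by simp
  have iq: "1 \<le> 1 / (1 - p)" using p by simp
  have W1: "W n p m H v w = (1 / p) ^ card ?A * (1 / (1 - p)) ^ card (?S - ?A)"
    unfolding W_def qq_def by (simp add: power_one_over)
  have X: "(1 / p) ^ card ?A \<le> ((1 / p) powr (\<alpha> / 2)) ^ t"
  proof -
    have "(1 / p) ^ card ?A = (1 / p) powr real (card ?A)" using p by (simp add: powr_realpow)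
    also have "\<dots> \<le> (1 / p) powr (\<alpha> / 2 * real t)" by (rule powr_mono[OF _ ip]) (use cA in simp)
    also have "\<dots> = ((1 / p) powr (\<alpha> / 2)) ^ t" using p by (simp add: powr_power mult.commute)
    finally show ?thesis .
  qed
  have Y: "(1 / (1 - p)) ^ card (?S - ?A) \<le> (1 / (1 - p)) ^ (m * t)"
  proof (rule power_increasing[OF _ iq])
    have "card (?S - ?A) \<le> card ?S"
      by (rule card_mono) (use finite_subset[OF _ finite_all_pairs] Pv_sub in blast)+
    then show "card (?S - ?A) \<le> m * t" using cS by simp
  qed
  have "W n p m H v w \<le> ((1 / p) powr (\<alpha> / 2)) ^ t * (1 / (1 - p)) ^ (m * t)"
    unfolding W1 by (rule mult_mono[OF X Y]) (use p in simp_all)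
  also have "((1 / p) powr (\<alpha> / 2)) ^ t * (1 / (1 - p)) ^ (m * t) = ((1 / p) powr (\<alpha> / 2) * (1 / (1 - p)) ^ m) ^ t"
    by (simp add: power_mult power_mult_distrib)
  finally show ?thesis unfolding t_def .
qed

lemma card_part:
  assumes "1 \<le> i"
  shows "card (part n m i) = n div m"
proof -
  have "i * (n div m) = (i - 1) * (n div m) + n div m" using assms
    by (metis add.commute le_add_diff_inverse mult_Suc plus_1_eq_Suc)
  then show ?thesis unfolding part_def by simp
qed

lemma card_Vs: "card (Vs n m) = (n div m) ^ m"
proof -
  have "card (Vs n m) = (\<Prod>i\<in>{1..m}. card (part n m i))"
    unfolding Vs_def by (rule card_PiE) simp
  also have "\<dots> = (\<Prod>i\<in>{1..m}. n div m)" by (intro prod.cong refl card_part) auto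
  finally show ?thesis by simp
qed

lemma sum_Tpow:
  assumes v: "v \<in> Vs n m"
  shows "(\<Sum>w\<in>Vs n m. (y::real) ^ card (Tset m v w)) = (y + real (n div m) - 1) ^ m"
proof -
  have fin: "finite (part n m i)" for i unfolding part_def by simp
  have "(\<Sum>w\<in>Vs n m. y ^ card (Tset m v w)) = (\<Sum>w\<in>Vs n m. \<Prod>i\<in>{1..m}. if v i = w i then y else 1)"
  proof (intro sum.cong refl)
    fix w
    have "(\<Prod>i\<in>{1..m}. if v i = w i then y else 1) = (\<Prod>i\<in>Tset m v w. y)"
      unfolding Tset_def by (rule prod.inter_filter[symmetric]) simp
    then show "y ^ card (Tset m v w) = (\<Prod>i\<in>{1..m}. if v i = w i then y else 1)" by simp
  qed
  also have "\<dots> = (\<Prod>i\<in>{1..m}. \<Sum>x\<in>part n m i. if v i = x then y else 1)"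
    unfolding Vs_def by (rule prod_sum_PiE[symmetric]) (auto simp: fin)
  also have "\<dots> = (\<Prod>i\<in>{1..m}. y + real (n div m) - 1)"
  proof (intro prod.cong refl)
    fix i assume i: "i \<in> {1..m}"
    have vi: "v i \<in> part n m i" using v i unfolding Vs_def by (simp add: PiE_iff)
    have r: "(\<Sum>x\<in>part n m i. if v i = x then y else 1) = (if v i = v i then y else 1) + (\<Sum>x\<in>part n m i - {v i}. if v i = x then y else 1)"
      by (rule sum.remove[OF fin vi])
    have a1: "(\<Sum>x\<in>part n m i - {v i}. if v i = x then y else 1) = (\<Sum>x\<in>part n m i - {v i}. 1)"
      by (intro sum.cong refl) auto
    have cp: "card (part n m i) = n div m" using i by (intro card_part) auto
    have cpos: "1 \<le> card (part n m i)" using vi fin by (metis One_nat_def Suc_leI card_gt_0_iff empty_iff)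
    have a2: "(\<Sum>x\<in>part n m i - {v i}. (1::real)) = real (n div m) - 1"
      using vi fin cpos cp by (simp add: card_Diff_singleton of_nat_diff)
    show "(\<Sum>x\<in>part n m i. if v i = x then y else 1) = y + real (n div m) - 1"
      unfolding r a1 a2 by simp
  qed
  also have "\<dots> = (y + real (n div m) - 1) ^ m" by simp
  finally show ?thesis .
qed

lemma main_bound:
  assumes "m dvd n" "1 \<le> m" "1 \<le> n" "is_graph m H" "balanced m H" "avg_degree m H = \<alpha>"
    and p: "0 < p" "p < 1" and b: "0 \<le> \<beta>" "\<beta> < 1"
    and y: "y = (1 / p) powr (\<alpha> / 2) * (1 / (1 - p)) ^ m"
    and eps: "((y + real (n div m) - 1) / real (n div m)) ^ m \<le> 1 + \<epsilon>"
  shows "measure_pmf.prob (gnp n p) {G. pmf (gHnp n p m H) G \<ge> \<beta> * pmf (gnp n p) G} \<ge> 1 - \<epsilon> / (1 - \<beta>)^2"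
proof -
  let ?V = "Vs n m"
  let ?k = "real (n div m)"
  let ?L = "Lr n p m H"
  let ?M = "gnp n p"
  let ?\<Omega> = "Pow (all_pairs n)"
  have kpos: "0 < ?k" using assms(1-3)
    by (metis div_greater_zero_iff dvd_imp_le le_zero_eq not_one_le_zero of_nat_0_less_iff zero_less_iff_neq_zero)
  have finO: "finite ?\<Omega>" using finite_all_pairs by simp
  have E2: "Ex n p (\<lambda>G. (?L G)^2) \<le> 1 + \<epsilon>"
  proof -
    have "Ex n p (\<lambda>G. (?L G)^2) \<le> (\<Sum>v\<in>?V. \<Sum>w\<in>?V. W n p m H v w) / real (card ?V)^2"
      by (rule Ex_Lr2[OF assms(1-4) p])
    also have "\<dots> \<le> (\<Sum>v\<in>?V. \<Sum>w\<in>?V. y ^ card (Tset m v w)) / real (card ?V)^2"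
      unfolding y by (intro divide_right_mono sum_mono W_bound[OF _ _ assms(4,5,6) p]) auto
    also have "\<dots> = (\<Sum>v\<in>?V. (y + ?k - 1) ^ m) / real (card ?V)^2"
      by (simp add: sum_Tpow)
    also have "\<dots> = ((y + ?k - 1) / ?k) ^ m"
      using kpos by (simp add: card_Vs power2_eq_square power_divide)
    also have "\<dots> \<le> 1 + \<epsilon>" by (rule eps)
    finally show ?thesis .
  qed
  have E1: "Ex n p ?L = 1" by (rule Ex_Lr[OF assms(1-4) p])
  have E0: "Ex n p (\<lambda>G. 1) = 1"
    unfolding Ex_def using sum_pmf_eq_1[OF finO set_gnp] by simp
  have Lnn: "0 \<le> ?L G" for G
    unfolding Lr_def using p by (intro divide_nonneg_nonneg sum_nonneg) (auto simp: order_less_imp_le[OF qq_pos[OF p]])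
  have pnn: "0 \<le> pmf ?M G" for G by simp
  define Bad where "Bad = {G \<in> ?\<Omega>. ?L G < \<beta>}"
  have "{G \<in> ?\<Omega>. \<not> ?L G < \<beta>} \<subseteq> {G. pmf (gHnp n p m H) G \<ge> \<beta> * pmf ?M G}"
  proof
    fix G assume G: "G \<in> {G \<in> ?\<Omega>. \<not> ?L G < \<beta>}"
    then have "pmf (gHnp n p m H) G = ?L G * pmf ?M G" using pmf_gHnp_Lr[OF assms(1-4) _ p] by auto
    moreover have "\<beta> * pmf ?M G \<le> ?L G * pmf ?M G" using G by (intro mult_right_mono) auto
    ultimately show "G \<in> {G. pmf (gHnp n p m H) G \<ge> \<beta> * pmf ?M G}" by simp
  qed
  then have "measure_pmf.prob ?M {G \<in> ?\<Omega>. \<not> ?L G < \<beta>} \<le> measure_pmf.prob ?M {G. pmf (gHnp n p m H) G \<ge> \<beta> * pmf ?M G}"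
    by (rule measure_pmf.finite_measure_mono) simp
  moreover have "measure_pmf.prob ?M {G \<in> ?\<Omega>. \<not> ?L G < \<beta>} = (\<Sum>G\<in>?\<Omega>. pmf ?M G) - (\<Sum>G\<in>Bad. pmf ?M G)"
  proof -
    have "measure_pmf.prob ?M {G \<in> ?\<Omega>. \<not> ?L G < \<beta>} = (\<Sum>G\<in>{G \<in> ?\<Omega>. \<not> ?L G < \<beta>}. pmf ?M G)"
      using finO by (simp add: measure_measure_pmf_finite)
    moreover have "(\<Sum>G\<in>?\<Omega>. pmf ?M G) = (\<Sum>G\<in>{G \<in> ?\<Omega>. \<not> ?L G < \<beta>}. pmf ?M G) + (\<Sum>G\<in>Bad. pmf ?M G)"
    proof -
      have "?\<Omega> = {G \<in> ?\<Omega>. \<not> ?L G < \<beta>} \<union> Bad" unfolding Bad_def by auto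
      moreover have "{G \<in> ?\<Omega>. \<not> ?L G < \<beta>} \<inter> Bad = {}" unfolding Bad_def by auto
      ultimately show ?thesis using finO by (metis (no_types, lifting) finite_Un sum.union_disjoint)
    qed
    ultimately show ?thesis by simp
  qed
  moreover have "(\<Sum>G\<in>?\<Omega>. pmf ?M G) = 1" by (rule sum_pmf_eq_1[OF finO set_gnp])
  moreover have "(\<Sum>G\<in>Bad. pmf ?M G) \<le> \<epsilon> / (1 - \<beta>)^2"
  proof -
    have bpos: "0 < (1 - \<beta>)^2" using b by simp
    have "(\<Sum>G\<in>Bad. pmf ?M G) \<le> (\<Sum>G\<in>Bad. pmf ?M G * ((?L G - 1)^2 / (1 - \<beta>)^2))"
    proof (rule sum_mono)
      fix G assume G: "G \<in> Bad"
      have "1 - \<beta> \<le> 1 - ?L G" using G unfolding Bad_def by auto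
      then have "(1 - \<beta>)^2 \<le> (1 - ?L G)^2" using b by (intro power_mono) auto
      then have "1 \<le> (?L G - 1)^2 / (1 - \<beta>)^2" using bpos by (simp add: power2_commute)
      then show "pmf ?M G \<le> pmf ?M G * ((?L G - 1)^2 / (1 - \<beta>)^2)"
        using pnn[of G] by (metis mult.right_neutral mult_left_mono)
    qed
    also have "\<dots> \<le> (\<Sum>G\<in>?\<Omega>. pmf ?M G * ((?L G - 1)^2 / (1 - \<beta>)^2))"
      by (rule sum_mono2[OF finO]) (auto simp: Bad_def)
    also have "\<dots> = Ex n p (\<lambda>G. (?L G - 1)^2) / (1 - \<beta>)^2"
      unfolding Ex_def by (simp add: sum_divide_distrib)
    also have "Ex n p (\<lambda>G. (?L G - 1)^2) = Ex n p (\<lambda>G. (?L G)^2) - 2 * Ex n p ?L + Ex n p (\<lambda>G. 1)"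
      unfolding Ex_def by (simp add: power2_diff algebra_simps sum.distrib sum_subtractf sum_distrib_left)
    also have "\<dots> \<le> \<epsilon>" using E2 E1 E0 by simp
    finally show ?thesis using bpos by (simp add: divide_right_mono)
  qed
  ultimately show ?thesis by linarith
qed

lemma asym_step:
  fixes u \<delta> \<rho> \<alpha> \<epsilon> c :: real
  assumes n2: "2 \<le> n" and mdvd: "m dvd n" and mr: "real m = real n powr \<rho>"
    and al: "0 \<le> \<alpha>"
    and c: "c = 2 * \<rho> + (1 - \<delta>) * \<alpha> / 2 - 1"
    and h1: "real n powr (\<rho> + \<delta> - 1) \<le> 1 / 2"
    and h2: "real n powr c \<le> 1 / 4" and h3: "4 * real n powr c \<le> \<epsilon>"
    and pd: "p = real n powr (\<delta> - 1)" and p: "0 < p" "p < 1"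
    and y: "y = (1 / p) powr (\<alpha> / 2) * (1 / (1 - p)) ^ m"
  shows "((y + real (n div m) - 1) / real (n div m)) ^ m \<le> 1 + \<epsilon>"
proof -
  have npos: "0 < real n" using n2 by simp
  have mpos: "0 < real m" using mr npos by simp
  have k: "real (n div m) = real n / real m" by (rule real_of_nat_div[OF mdvd])
  have kpos: "0 < real n / real m" using npos mpos by simp
  have y1: "1 \<le> (1 / p) powr (\<alpha> / 2)" using p al by (intro ge_one_powr_ge_zero) auto
  have y2: "1 \<le> (1 / (1 - p)) ^ m" using p by (intro one_le_power) simp
  have ynn: "1 \<le> y" unfolding y using y1 y2 by (metis mult_mono' mult_1 zero_le_one)
  have mp: "real m * p = real n powr (\<rho> + \<delta> - 1)"
    unfolding mr pd by (simp add: powr_add[symmetric] algebra_simps)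
  have bern: "1 - real m * p \<le> (1 - p) ^ m"
    using Bernoulli_inequality[of "- p" m] p by simp
  have qm: "1 / 2 \<le> (1 - p) ^ m" using bern mp h1 by simp
  have Y2: "(1 / (1 - p)) ^ m \<le> 2"
  proof -
    have "(1 / (1 - p)) ^ m = 1 / (1 - p) ^ m" by (simp add: power_one_over)
    also have "\<dots> \<le> 1 / (1 / 2)" using qm by (intro divide_left_mono) auto
    finally show ?thesis by simp
  qed
  have Y1: "(1 / p) powr (\<alpha> / 2) = real n powr ((1 - \<delta>) * \<alpha> / 2)"
  proof -
    have "1 / p = real n powr (1 - \<delta>)" unfolding pd using npos
      by (simp add: powr_minus_divide[symmetric])
    then show ?thesis using npos by (simp add: powr_powr)
  qed
  have yb: "y \<le> 2 * real n powr ((1 - \<delta>) * \<alpha> / 2)"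
    unfolding y Y1 using mult_right_mono[OF Y2, of "real n powr ((1 - \<delta>) * \<alpha> / 2)"] by (simp add: mult.commute)
  define z where "z = y / (real n / real m)"
  have z0: "0 \<le> z" unfolding z_def using ynn kpos by simp
  have "((y + real (n div m) - 1) / real (n div m)) ^ m \<le> (1 + z) ^ m"
  proof (rule power_mono)
    show "(y + real (n div m) - 1) / real (n div m) \<le> 1 + z"
      unfolding k z_def using kpos npos mpos by (simp add: field_simps)
    show "0 \<le> (y + real (n div m) - 1) / real (n div m)"
      unfolding k using kpos ynn by simp
  qed
  also have "\<dots> \<le> exp z ^ m" by (rule power_mono) (use z0 in auto)
  also have "\<dots> = exp (real m * z)" by (simp add: exp_of_nat_mult)
  also have "real m * z = real m ^ 2 * y / real n" unfolding z_def power2_eq_square using npos mpos by simp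
  also have "\<dots> \<le> 2 * real n powr c"
  proof -
    have "real m ^ 2 * y / real n \<le> real m ^ 2 * (2 * real n powr ((1 - \<delta>) * \<alpha> / 2)) / real n"
      using yb npos by (intro divide_right_mono mult_left_mono) auto
    also have "\<dots> = 2 * (real n powr (2 * \<rho>) * real n powr ((1 - \<delta>) * \<alpha> / 2) * real n powr (-1))"
    proof -
      have "real m ^ 2 = real n powr (2 * \<rho>)" unfolding mr using npos powr_power[of "real n" \<rho> 2] by simp
      moreover have "real n powr (-1) = 1 / real n" using npos by (simp add: powr_minus_divide)
      ultimately show ?thesis by simp
    qed
    also have "\<dots> = 2 * real n powr c"
    proof -
      have "real n powr (2 * \<rho>) * real n powr ((1 - \<delta>) * \<alpha> / 2) * real n powr (-1)
          = real n powr (2 * \<rho> + (1 - \<delta>) * \<alpha> / 2 + (-1))"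
        by (simp only: powr_add)
      also have "2 * \<rho> + (1 - \<delta>) * \<alpha> / 2 + (-1) = c" unfolding c by simp
      finally show ?thesis by simp
    qed
    finally show ?thesis .
  qed
  finally have A: "((y + real (n div m) - 1) / real (n div m)) ^ m \<le> exp (2 * real n powr c)"
    by (simp add: order_trans)
  have "exp (2 * real n powr c) \<le> 1 + 2 * (2 * real n powr c)"
    by (rule real_exp_bound_lemma) (use h2 in auto)
  also have "\<dots> \<le> 1 + \<epsilon>" using h3 by simp
  finally show ?thesis using A by simp
qed

lemma ev_powr:
  assumes "s < 0" "0 < b"
  shows "eventually (\<lambda>n. real n powr s < b) sequentially"
proof -
  have "((\<lambda>n. real n powr s) \<longlongrightarrow> 0) sequentially"
    by (rule tendsto_neg_powr[OF assms(1) filterlim_real_sequentially])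
  then show ?thesis using assms(2) by (rule order_tendstoD(2))
qed

theorem lemmaC2:
  fixes \<delta> \<epsilon> \<alpha> \<rho> :: real
  assumes "0 < \<delta>" "\<delta> < 1"
    and "0 < \<epsilon>" "\<epsilon> < 1/7"
    and "2 < \<alpha>" "\<alpha> < min (2 / (1 - \<delta>)) 3"
    and "0 < \<rho>" "\<rho> < min ((1 - \<delta>) / 2) ((2 - \<alpha> * (1 - \<delta>)) / 4)"
  shows "\<exists>N. \<forall>n \<ge> N. \<forall>m H. \<forall>\<beta>::real.
           m dvd n \<and> real m = real n powr \<rho> \<and>
           is_graph m H \<and> avg_degree m H = \<alpha> \<and> balanced m H \<and>
           0 \<le> \<beta> \<and> \<beta> < 1 \<longrightarrow>
           (let p = real n powr (\<delta> - 1) in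
              measure_pmf.prob (gnp n p)
                {G. pmf (gHnp n p m H) G \<ge> \<beta> * pmf (gnp n p) G}
              \<ge> 1 - 4 * \<epsilon> / (1 - \<beta>)^2)"
proof -
  define c where "c = 2 * \<rho> + (1 - \<delta>) * \<alpha> / 2 - 1"
  have r1: "\<rho> < (1 - \<delta>) / 2" and r2: "\<rho> < (2 - \<alpha> * (1 - \<delta>)) / 4" using assms(8) by auto
  have s1: "\<rho> + \<delta> - 1 < 0" using r1 assms(1,2) by (simp add: field_simps)
  have com: "(1 - \<delta>) * \<alpha> = \<alpha> * (1 - \<delta>)" by simp
  have c0: "c < 0" unfolding c_def using r2 com by (simp add: field_simps)
  have ev: "eventually (\<lambda>n. 2 \<le> n \<and> real n powr (\<rho> + \<delta> - 1) < 1 / 2 \<and> real n powr c < 1 / 4 \<and> real n powr c < \<epsilon> / 4) sequentially"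
    by (intro eventually_conj eventually_ge_at_top ev_powr[OF s1] ev_powr[OF c0]) (use assms(3) in auto)
  then obtain N where N: "\<And>n. n \<ge> N \<Longrightarrow> 2 \<le> n \<and> real n powr (\<rho> + \<delta> - 1) < 1 / 2 \<and> real n powr c < 1 / 4 \<and> real n powr c < \<epsilon> / 4"
    unfolding eventually_sequentially by blast
  show ?thesis
  proof (intro exI allI impI)
    fix n m H and \<beta> :: real
    assume n: "n \<ge> N"
    assume h: "m dvd n \<and> real m = real n powr \<rho> \<and> is_graph m H \<and> avg_degree m H = \<alpha> \<and> balanced m H \<and> 0 \<le> \<beta> \<and> \<beta> < 1"
    have hn: "2 \<le> n" "real n powr (\<rho> + \<delta> - 1) < 1 / 2" "real n powr c < 1 / 4" "real n powr c < \<epsilon> / 4"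
      using N[OF n] by auto
    define p where "p = real n powr (\<delta> - 1)"
    have p0: "0 < p" unfolding p_def using hn(1) by simp
    have p1: "p < 1" unfolding p_def using hn(1) assms(2) by (intro powr_less_one) auto
    have mpos: "0 < real m" using h hn(1) by simp
    then have m1: "1 \<le> m" by simp
    define y where "y = (1 / p) powr (\<alpha> / 2) * (1 / (1 - p)) ^ m"
    have eps: "((y + real (n div m) - 1) / real (n div m)) ^ m \<le> 1 + \<epsilon>"
      by (rule asym_step[OF hn(1) _ _ _ c_def _ _ _ p_def p0 p1 y_def])
         (use h assms(5) hn in auto)
    have "measure_pmf.prob (gnp n p) {G. pmf (gHnp n p m H) G \<ge> \<beta> * pmf (gnp n p) G} \<ge> 1 - \<epsilon> / (1 - \<beta>)^2"
      by (rule main_bound[OF _ m1 _ _ _ _ p0 p1 _ _ y_def eps]) (use h hn(1) in auto)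
    moreover have "\<epsilon> / (1 - \<beta>)^2 \<le> 4 * \<epsilon> / (1 - \<beta>)^2"
      using assms(3) by (intro divide_right_mono) auto
    ultimately show "let p = real n powr (\<delta> - 1) in
              measure_pmf.prob (gnp n p)
                {G. pmf (gHnp n p m H) G \<ge> \<beta> * pmf (gnp n p) G}
              \<ge> 1 - 4 * \<epsilon> / (1 - \<beta>)^2"
      unfolding p_def Let_def by linarith
  qed
qed

end
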